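(* If the alphabet $\mathcal{A}\subset\mathbb{N}$ contains $1$ and $2$, then the semigroup $\Gamma_{\mathcal{A}}$ has everywhere strong approximation.
   Context: For $a\in\mathbb{N}$ let $\gamma_a=\begin{pmatrix}0&1\\1&a\end{pmatrix}$. $\Gamma_{\mathcal{A}}\subset\mathrm{SL}_2(\mathbb{Z})$ is the semigroup generated by the products $\gamma_a\gamma_{a'}$, $a,a'\in\mathcal{A}$. $\Gamma_{\mathcal{A}}$ has everywhere strong approximation if for every $q\in\mathbb{N}$ the reduction of $\Gamma_{\mathcal{A}}$ modulo $q$ equals $\mathrm{SL}_2(\mathbb{Z}/q\mathbb{Z})$. *)

theory Defs
  imports Main
begin

type_synonym mat2 = "int \<times> int \<times> int \<times> int"

fun mmul :: "mat2 \<Rightarrow> mat2 \<Rightarrow> mat2" where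
  "mmul (a, b, c, d) (a', b', c', d') =
     (a * a' + b * c', a * b' + b * d', c * a' + d * c', c * b' + d * d')"

fun mdet :: "mat2 \<Rightarrow> int" where
  "mdet (a, b, c, d) = a * d - b * c"

definition gamma :: "nat \<Rightarrow> mat2" where
  "gamma a = (0, 1, 1, int a)"

inductive_set Gamma_semigroup :: "nat set \<Rightarrow> mat2 set" for A :: "nat set" where
  gen: "a \<in> A \<Longrightarrow> a' \<in> A \<Longrightarrow> mmul (gamma a) (gamma a') \<in> Gamma_semigroup A"
| mult: "g \<in> Gamma_semigroup A \<Longrightarrow> h \<in> Gamma_semigroup A \<Longrightarrow> mmul g h \<in> Gamma_semigroup A"

fun mcong :: "mat2 \<Rightarrow> mat2 \<Rightarrow> int \<Rightarrow> bool" where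
  "mcong (a, b, c, d) (a', b', c', d') q \<longleftrightarrow>
     a mod q = a' mod q \<and> b mod q = b' mod q \<and> c mod q = c' mod q \<and> d mod q = d' mod q"

text \<open>Reduction of S modulo q equals SL_2(Z/qZ): every element of S has determinant 1
  (hence reduces into SL_2), and every integer matrix whose determinant is 1 mod q
  (i.e. every element of SL_2(Z/qZ), via its entrywise lifts) is congruent mod q to
  an element of S.\<close>
definition everywhere_strong_approx :: "mat2 set \<Rightarrow> bool" where
  "everywhere_strong_approx S \<longleftrightarrow>
     (\<forall>q::nat. q \<ge> 1 \<longrightarrow>
        (\<forall>M. mdet M mod int q = 1 mod int q \<longrightarrow> (\<exists>g\<in>S. mcong g M (int q))))"

end

theory Submission
  imports Defs "HOL-Number_Theory.Cong"
begin

lemma mmul_assoc: "mmul (mmul X Y) Z = mmul X (mmul Y Z)"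
  by (cases X; cases Y; cases Z) (simp add: algebra_simps)

lemma mmul_I_left[simp]: "mmul (1,0,0,1) X = X"
  by (cases X) simp

lemma mmul_I_right[simp]: "mmul X (1,0,0,1) = X"
  by (cases X) simp

lemma mdet_mult: "mdet (mmul X Y) = mdet X * mdet Y"
  by (cases X; cases Y) (simp add: algebra_simps)

fun adj :: "mat2 \<Rightarrow> mat2" where
  "adj (a,b,c,d) = (d,-b,-c,a)"

lemma adj_mult: "adj (mmul X Y) = mmul (adj Y) (adj X)"
  by (cases X; cases Y) (simp add: algebra_simps)

lemma adj_left: "mdet X = 1 \<Longrightarrow> mmul (adj X) X = (1,0,0,1)"
  by (cases X) (simp add: algebra_simps)

lemma mcong_refl[simp]: "mcong X X q"
  by (cases X) simp

lemma mcong_sym: "mcong X Y q \<Longrightarrow> mcong Y X q"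
  by (cases X; cases Y) simp

lemma mcong_trans: "mcong X Y q \<Longrightarrow> mcong Y Z q \<Longrightarrow> mcong X Z q"
  by (cases X; cases Y; cases Z) simp

lemma mcong_mult: "mcong X X' q \<Longrightarrow> mcong Y Y' q \<Longrightarrow> mcong (mmul X Y) (mmul X' Y') q"
  by (cases X; cases Y; cases X'; cases Y')
     (auto simp: cong_def[symmetric] intro!: cong_add cong_mult)

lemma mcong_cancel:
  assumes "mdet g = 1" "mcong (mmul g X) (mmul g Y) q"
  shows "mcong X Y q"
proof -
  have "mcong (mmul (adj g) (mmul g X)) (mmul (adj g) (mmul g Y)) q"
    using assms(2) by (rule mcong_mult[OF mcong_refl])
  thus ?thesis by (simp add: mmul_assoc[symmetric] adj_left[OF assms(1)])
qed

fun mpow :: "mat2 \<Rightarrow> nat \<Rightarrow> mat2" where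
  "mpow g 0 = (1,0,0,1)"
| "mpow g (Suc n) = mmul g (mpow g n)"

lemma mpow_add: "mpow g (m + n) = mmul (mpow g m) (mpow g n)"
  by (induction m) (auto simp: mmul_assoc)

lemma mpow_Suc_right: "mpow g (Suc n) = mmul (mpow g n) g"
  using mpow_add[of g n 1] by simp

lemma mdet_mpow: "mdet g = 1 \<Longrightarrow> mdet (mpow g n) = 1"
  by (induction n) (auto simp: mdet_mult)

fun red :: "int \<Rightarrow> mat2 \<Rightarrow> mat2" where
  "red q (a,b,c,d) = (a mod q, b mod q, c mod q, d mod q)"

lemma mcong_red: "mcong X Y q \<longleftrightarrow> red q X = red q Y"
  by (cases X; cases Y) simp

lemma red_range: "q > 0 \<Longrightarrow> red q X \<in> {0..<q} \<times> {0..<q} \<times> {0..<q} \<times> {0..<q}"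
  by (cases X) simp

lemma finite_order:
  assumes "mdet g = 1" "q > 0"
  shows "\<exists>N\<ge>1. mcong (mpow g N) (1,0,0,1) q"
proof -
  let ?f = "\<lambda>n. red q (mpow g n)"
  have "range ?f \<subseteq> {0..<q} \<times> {0..<q} \<times> {0..<q} \<times> {0..<q}"
    by (simp add: image_subset_iff red_range assms(2) del: red.simps)
  hence fin: "finite (range ?f)" by (rule finite_subset) auto
  have "\<not> inj ?f"
  proof
    assume "inj ?f"
    hence "finite (UNIV :: nat set)" using fin finite_imageD by blast
    thus False by simp
  qed
  then obtain i j where ij: "i \<noteq> j" "?f i = ?f j" unfolding inj_def by blast
  obtain j0 d where jd: "d \<ge> 1" "red q (mpow g j0) = red q (mpow g (j0 + d))"
  proof (cases "i < j")
    case True thus ?thesis using that[of "j - i" i] ij by auto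
  next
    case False thus ?thesis using that[of "i - j" j] ij by auto
  qed
  have "mcong (mpow g j) (mmul (mpow g j) (mpow g d)) q \<Longrightarrow> mcong (1,0,0,1) (mpow g d) q" for j
  proof (induction j)
    case 0 thus ?case by simp
  next
    case (Suc j)
    hence "mcong (mmul g (mpow g j)) (mmul g (mmul (mpow g j) (mpow g d))) q"
      by (simp add: mmul_assoc)
    hence "mcong (mpow g j) (mmul (mpow g j) (mpow g d)) q"
      using mcong_cancel assms(1) by blast
    thus ?case by (rule Suc.IH)
  qed
  moreover have "mcong (mpow g j0) (mmul (mpow g j0) (mpow g d)) q"
    using jd(2) by (simp add: mcong_red mpow_add)
  ultimately show ?thesis using jd(1) mcong_sym by blast
qed

inductive_set EL :: "mat2 set" where
  I: "(1,0,0,1) \<in> EL"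
| U: "X \<in> EL \<Longrightarrow> mmul (1,t,0,1) X \<in> EL"
| L: "X \<in> EL \<Longrightarrow> mmul (1,0,t,1) X \<in> EL"

lemma EL_mult: "X \<in> EL \<Longrightarrow> Y \<in> EL \<Longrightarrow> mmul X Y \<in> EL"
  by (induction X rule: EL.induct) (auto simp: mmul_assoc intro: EL.intros)

lemma EL_U: "(1,t,0,1) \<in> EL"
  using EL.U[OF EL.I, of t] by simp

lemma EL_L: "(1,0,t,1) \<in> EL"
  using EL.L[OF EL.I, of t] by simp

lemma EL_det: "X \<in> EL \<Longrightarrow> mdet X = 1"
  by (induction X rule: EL.induct) (auto simp: mdet_mult)

lemma EL_adj: "X \<in> EL \<Longrightarrow> adj X \<in> EL"
proof (induction X rule: EL.induct)
  case I
  then show ?case using EL.I by simp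
next
  case (U X t)
  then show ?case using EL_mult[OF U.IH EL_U[of "-t"]] by (simp add: adj_mult)
next
  case (L X t)
  then show ?case using EL_mult[OF L.IH EL_L[of "-t"]] by (simp add: adj_mult)
qed

lemma euclid: "\<exists>X\<in>EL. \<exists>g b' d'. mmul X (a,b,c,d) = (g,b',0,d')"
proof (induction "nat \<bar>c\<bar>" arbitrary: a b c d rule: less_induct)
  case less
  show ?case
  proof (cases "c = 0")
    case True
    then show ?thesis using EL.I by force
  next
    case False
    define t where "t = a div c"
    define a1 where "a1 = a mod c"
    have a1: "a - t * c = a1" unfolding t_def a1_def
      by (metis add_diff_cancel_left' div_mult_mod_eq add.commute)
    have M1: "mmul (1,-t,0,1) (a,b,c,d) = (a1, b - t*d, c, d)"
      using a1 by (simp add: algebra_simps)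
    show ?thesis
    proof (cases "a1 = 0")
      case True
      let ?X = "mmul (1,0,-1,1) (mmul (1,1,0,1) (1,-t,0,1))"
      have "?X \<in> EL" by (intro EL_mult EL_U EL_L)
      moreover have "mmul ?X (a,b,c,d) = (c, b - t*d + d, 0, d - (b - t*d + d))"
        using M1 True by (simp add: mmul_assoc algebra_simps)
      ultimately show ?thesis by blast
    next
      case False
      define s where "s = c div a1"
      define c1 where "c1 = c mod a1"
      have c1: "c - s * a1 = c1" unfolding s_def c1_def
        by (metis add_diff_cancel_left' div_mult_mod_eq add.commute)
      have M2: "mmul (1,0,-s,1) (a1, b - t*d, c, d) = (a1, b - t*d, c1, d - s*(b - t*d))"
        using c1 by (simp add: algebra_simps)
      have "\<bar>c1\<bar> < \<bar>a1\<bar>" unfolding c1_def using False abs_mod_less by blast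
      moreover have "\<bar>a1\<bar> < \<bar>c\<bar>" unfolding a1_def using \<open>c \<noteq> 0\<close> abs_mod_less by blast
      ultimately have "nat \<bar>c1\<bar> < nat \<bar>c\<bar>" by simp
      from less[OF this] obtain X' g b' d' where X': "X' \<in> EL"
        "mmul X' (a1, b - t*d, c1, d - s*(b - t*d)) = (g,b',0,d')" by blast
      let ?X = "mmul X' (mmul (1,0,-s,1) (1,-t,0,1))"
      have "?X \<in> EL" using X'(1) by (intro EL_mult EL_U EL_L)
      moreover have "mmul ?X (a,b,c,d) = (g,b',0,d')"
        using M1 M2 X'(2) by (simp only: mmul_assoc)
      ultimately show ?thesis by blast
    qed
  qed
qed

lemma triang:
  assumes "(u*v) mod q = 1 mod q"
  shows "\<exists>Y\<in>EL. mcong Y (u,b,0,v) q"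
proof -
  obtain k where k: "u*v - 1 = q * k" using assms mod_eq_dvd_iff by blast
  define e where "e = 1 - u*v"
  define s where "s = v*b"
  have e: "e = - (q*k)" using k e_def by simp
  let ?Y = "mmul (1,u,0,1) (mmul (1,0,-v,1) (mmul (1,u,0,1) (mmul (1,-1,0,1)
             (mmul (1,0,1,1) (mmul (1,-1,0,1) (1,s,0,1))))))"
  have Y: "?Y \<in> EL" by (intro EL_mult EL_U EL_L)
  have eq: "?Y = (u*(1+e), u*(1+e)*s - e, e, e*s+v)"
    unfolding e_def by (simp add: algebra_simps)
  have c: "mcong (u*(1+e), u*(1+e)*s - e, e, e*s+v) (u,b,0,v) q"
  proof -
    have 1: "u*(1+e) - u = q * (-u*k)" using e by (simp add: algebra_simps)
    have 2: "u*(1+e)*s - e - b = q * (k*b - u*k*s + k)"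
      using e k unfolding s_def by (simp add: algebra_simps)
    have 3: "e - 0 = q * (-k)" using e by simp
    have 4: "e*s+v - v = q * (-k*s)" using e by (simp add: algebra_simps)
    have "\<And>x y z. x - y = q * z \<Longrightarrow> x mod q = y mod q"
      by (metis mod_eq_dvd_iff dvd_triv_left)
    from this[OF 1] this[OF 2] this[OF 3] this[OF 4] show ?thesis by simp
  qed
  show ?thesis using Y c unfolding eq by blast
qed

lemma SL_EL:
  assumes "mdet M mod q = 1 mod q"
  shows "\<exists>Z\<in>EL. mcong Z M q"
proof -
  obtain a b c d where M: "M = (a,b,c,d)" by (cases M) auto
  obtain X g b' d' where X: "X \<in> EL" "mmul X M = (g,b',0,d')"
    using euclid M by blast
  have "mdet (mmul X M) = mdet M" using EL_det[OF X(1)] by (simp add: mdet_mult)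
  hence "(g*d') mod q = 1 mod q" using X(2) assms by simp
  then obtain Y where Y: "Y \<in> EL" "mcong Y (g,b',0,d') q" using triang by blast
  have "M = mmul (adj X) (mmul X M)"
    by (simp add: mmul_assoc[symmetric] adj_left[OF EL_det[OF X(1)]])
  hence "mcong (mmul (adj X) Y) M q" using X(2) mcong_mult[OF mcong_refl Y(2)] by metis
  moreover have "mmul (adj X) Y \<in> EL" using EL_mult EL_adj X(1) Y(1) by blast
  ultimately show ?thesis by blast
qed

lemma mpow_cong: "mcong g E q \<Longrightarrow> mcong (mpow g n) (mpow E n) q"
  by (induction n) (auto intro: mcong_mult)

lemma mpow_in: "(\<And>x y. x \<in> S \<Longrightarrow> y \<in> S \<Longrightarrow> mmul x y \<in> S) \<Longrightarrow> g \<in> S \<Longrightarrow> n \<ge> 1 \<Longrightarrow> mpow g n \<in> S"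
proof (induction n)
  case 0 thus ?case by simp
next
  case (Suc n)
  thus ?case by (cases n) auto
qed

lemma mpow_U: "mpow (1,1,0,1) n = (1, int n, 0, 1)"
  by (induction n) auto

lemma mpow_L: "mpow (1,0,1,1) n = (1, 0, int n, 1)"
  by (induction n) auto

lemma all_U:
  assumes cl: "\<And>x y. x \<in> S \<Longrightarrow> y \<in> S \<Longrightarrow> mmul x y \<in> S"
    and g: "g \<in> S" "mcong g (1,1,0,1) (int q)" and q: "q \<ge> 1"
  shows "\<exists>h\<in>S. mcong h (1,t,0,1) (int q)"
proof -
  define n where "n = nat (t mod int q) + q"
  have n1: "n \<ge> 1" using q n_def by simp
  have "mcong (mpow g n) (1, int n, 0, 1) (int q)"
    using mpow_cong[OF g(2), of n] by (simp add: mpow_U)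
  moreover have "int n mod int q = t mod int q" unfolding n_def using q by simp
  ultimately have "mcong (mpow g n) (1, t, 0, 1) (int q)"
    using mcong_trans[of "mpow g n" "(1, int n, 0, 1)" "int q" "(1,t,0,1)"] by simp
  thus ?thesis using mpow_in[OF cl g(1) n1] by blast
qed

lemma all_L:
  assumes cl: "\<And>x y. x \<in> S \<Longrightarrow> y \<in> S \<Longrightarrow> mmul x y \<in> S"
    and g: "g \<in> S" "mcong g (1,0,1,1) (int q)" and q: "q \<ge> 1"
  shows "\<exists>h\<in>S. mcong h (1,0,t,1) (int q)"
proof -
  define n where "n = nat (t mod int q) + q"
  have n1: "n \<ge> 1" using q n_def by simp
  have "mcong (mpow g n) (1, 0, int n, 1) (int q)"
    using mpow_cong[OF g(2), of n] by (simp add: mpow_L)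
  moreover have "int n mod int q = t mod int q" unfolding n_def using q by simp
  ultimately have "mcong (mpow g n) (1, 0, t, 1) (int q)"
    using mcong_trans[of "mpow g n" "(1, 0, int n, 1)" "int q" "(1,0,t,1)"] by simp
  thus ?thesis using mpow_in[OF cl g(1) n1] by blast
qed

lemma EL_S:
  assumes cl: "\<And>x y. x \<in> S \<Longrightarrow> y \<in> S \<Longrightarrow> mmul x y \<in> S"
    and hU: "\<And>t. \<exists>h\<in>S. mcong h (1,t,0,1) q"
    and hL: "\<And>t. \<exists>h\<in>S. mcong h (1,0,t,1) q"
    and X: "X \<in> EL"
  shows "\<exists>h\<in>S. mcong h X q"
  using X
proof (induction X rule: EL.induct)
  case I
  then show ?case using hU[of 0] by simp
next
  case (U X t)
  then obtain h1 h2 where "h1 \<in> S" "mcong h1 (1,t,0,1) q" "h2 \<in> S" "mcong h2 X q"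
    using hU by blast
  thus ?case using cl mcong_mult by blast
next
  case (L X t)
  then obtain h1 h2 where "h1 \<in> S" "mcong h1 (1,0,t,1) q" "h2 \<in> S" "mcong h2 X q"
    using hL by blast
  thus ?case using cl mcong_mult by blast
qed

theorem lemmaB2:
  fixes A :: "nat set"
  assumes "A \<subseteq> {1..}"
    and "1 \<in> A" and "2 \<in> A"
  shows "everywhere_strong_approx (Gamma_semigroup A)"
  unfolding everywhere_strong_approx_def
proof (intro allI impI)
  fix q :: nat and M
  assume q: "q \<ge> 1" and M: "mdet M mod int q = 1 mod int q"
  let ?S = "Gamma_semigroup A"
  have cl: "\<And>x y. x \<in> ?S \<Longrightarrow> y \<in> ?S \<Longrightarrow> mmul x y \<in> ?S"
    by (rule Gamma_semigroup.mult)
  have G11: "(1,1,1,2) \<in> ?S"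
    using Gamma_semigroup.gen[OF assms(2) assms(2)] by (simp add: gamma_def)
  have G12: "(1,2,1,3) \<in> ?S"
    using Gamma_semigroup.gen[OF assms(2) assms(3)] by (simp add: gamma_def)
  have G21: "(1,1,2,3) \<in> ?S"
    using Gamma_semigroup.gen[OF assms(3) assms(2)] by (simp add: gamma_def)
  obtain N where N: "N \<ge> 1" "mcong (mpow (1,1,1,2) N) (1,0,0,1) (int q)"
    using finite_order[of "(1,1,1,2)" "int q"] q by auto
  define m where "m = 2*N - 1"
  define P where "P = mpow (1,1,1,2) m"
  have PS: "P \<in> ?S" unfolding P_def m_def using mpow_in[OF cl G11] N(1) by simp
  have "mpow (1,1,1,2) (2*N) = mmul (mpow (1,1,1,2) N) (mpow (1,1,1,2) N)"
    using mpow_add[of _ N N] by (simp add: mult_2)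
  hence inv0: "mcong (mpow (1,1,1,2) (2*N)) (1,0,0,1) (int q)"
    using mcong_mult[OF N(2) N(2)] by simp
  have "Suc m = 2*N" unfolding m_def using N(1) by simp
  hence inv1: "mcong (mmul P (1,1,1,2)) (1,0,0,1) (int q)"
   and inv2: "mcong (mmul (1,1,1,2) P) (1,0,0,1) (int q)"
    using inv0 mpow_Suc_right[of "(1,1,1,2)" m] unfolding P_def by (metis mpow.simps(2))+
  have "mmul P (1,2,1,3) = mmul (mmul P (1,1,1,2)) (1,1,0,1)"
    by (simp add: mmul_assoc)
  hence cU: "mcong (mmul P (1,2,1,3)) (1,1,0,1) (int q)"
    using mcong_mult[OF inv1 mcong_refl, of "(1,1,0,1)"] by simp
  have "mmul (1,1,2,3) P = mmul (1,0,1,1) (mmul (1,1,1,2) P)"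
    by (simp add: mmul_assoc[symmetric])
  hence cL: "mcong (mmul (1,1,2,3) P) (1,0,1,1) (int q)"
    using mcong_mult[OF mcong_refl inv2, of "(1,0,1,1)"] by simp
  have hU: "\<And>t. \<exists>h\<in>?S. mcong h (1,t,0,1) (int q)"
    using all_U[OF cl _ cU q] cl[OF PS G12] by blast
  have hL: "\<And>t. \<exists>h\<in>?S. mcong h (1,0,t,1) (int q)"
    using all_L[OF cl _ cL q] cl[OF G21 PS] by blast
  obtain Z where Z: "Z \<in> EL" "mcong Z M (int q)" using SL_EL[OF M] by blast
  obtain h where "h \<in> ?S" "mcong h Z (int q)" using EL_S[OF cl hU hL Z(1)] by blast
  thus "\<exists>g\<in>?S. mcong g M (int q)" using Z(2) mcong_trans by blast
qed

end
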